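(* Let $n\ge2$ and $\mathcal{P}=\{x\in\mathbb{R}^n:\tfrac12(\max_i x_i-\min_i x_i)\le1\}$. The lattice of double-faces of $\mathcal{P}$ has the Sperner property, i.e., the maximum size of an antichain in it equals the maximum size of a rank level. Moreover, the set of all double-faces of $\mathcal{P}$ of dimension $\lfloor n/3\rfloor+1$ is an antichain of maximum size.
   Context: For a polyhedron $\mathcal{Q}$, a face is $\mathcal{Q}$, $\varnothing$, or a nonempty set $\mathcal{Q}\cap\{x:b^\top x=c\}$ where $b^\top x\le c$ for all $x\in\mathcal{Q}$; its dimension is that of its affine hull; a proper face is a face other than $\mathcal{Q}$ and $\varnothing$. For centrally symmetric $\mathcal{Q}$ ($\mathcal{Q}=-\mathcal{Q}$), a double-face is a set $F\cup -F$ with $F$ a proper face, and its dimension/rank is the dimension of $F$. The lattice of double-faces is the set of all double-faces together with $\mathcal{Q}$ (rank $n$) and $\varnothing$ (rank one less than the smallest dimension of a proper face), partially ordered by inclusion; it is graded by this rank, and a rank level is the set of all its elements of a given rank. An antichain is a set of pairwise incomparable elements. *)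

theory Defs
  imports "HOL-Analysis.Analysis"
begin

definition poly_face :: "'a::euclidean_space set \<Rightarrow> 'a set \<Rightarrow> bool" where
  "poly_face Q F \<longleftrightarrow> F = Q \<or> F = {} \<or>
     (\<exists>b c. (\<forall>x\<in>Q. inner b x \<le> c) \<and> F = Q \<inter> {x. inner b x = c} \<and> F \<noteq> {})"

definition proper_face :: "'a::euclidean_space set \<Rightarrow> 'a set \<Rightarrow> bool" where
  "proper_face Q F \<longleftrightarrow> poly_face Q F \<and> F \<noteq> Q \<and> F \<noteq> {}"

text \<open>Double-faces F \<union> -F (pointwise negation, not complement).\<close>
definition double_face :: "'a::euclidean_space set \<Rightarrow> 'a set \<Rightarrow> bool" where
  "double_face Q D \<longleftrightarrow> (\<exists>F. proper_face Q F \<and> D = F \<union> uminus ` F)"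

definition double_faces_of_dim :: "'a::euclidean_space set \<Rightarrow> int \<Rightarrow> 'a set set" where
  "double_faces_of_dim Q k = {D. \<exists>F. proper_face Q F \<and> aff_dim F = k \<and> D = F \<union> uminus ` F}"

definition df_lattice :: "'a::euclidean_space set \<Rightarrow> 'a set set" where
  "df_lattice Q = {D. double_face Q D} \<union> {Q, {}}"

definition df_rank :: "'a::euclidean_space set \<Rightarrow> 'a set \<Rightarrow> int" where
  "df_rank Q D =
     (if D = Q then int DIM('a)
      else if D = {} then Min {aff_dim F | F. proper_face Q F} - 1
      else aff_dim (SOME F. proper_face Q F \<and> D = F \<union> uminus ` F))"

definition rank_level :: "'a::euclidean_space set \<Rightarrow> int \<Rightarrow> 'a set set" where
  "rank_level Q k = {D \<in> df_lattice Q. df_rank Q D = k}"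

definition df_antichain :: "'a::euclidean_space set \<Rightarrow> 'a set set \<Rightarrow> bool" where
  "df_antichain Q A \<longleftrightarrow> A \<subseteq> df_lattice Q \<and>
     (\<forall>X\<in>A. \<forall>Y\<in>A. X \<noteq> Y \<longrightarrow> \<not> X \<subseteq> Y)"

definition Pspread :: "(real ^ 'n) set" where
  "Pspread = {x. (Max (range (\<lambda>i. x $ i)) - Min (range (\<lambda>i. x $ i))) / 2 \<le> 1}"

end

theory Submission
  imports Defs
begin


lemma double_count:
  assumes "finite X" "finite Y"
    and "\<And>x. x \<in> X \<Longrightarrow> a \<le> card {y \<in> Y. R x y}"
    and "\<And>y. y \<in> Y \<Longrightarrow> card {x \<in> X. R x y} \<le> b"
  shows "a * card X \<le> b * card Y"
proof -
  have "a * card X = (\<Sum>x\<in>X. a)" by simp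
  also have "\<dots> \<le> (\<Sum>x\<in>X. card {y \<in> Y. R x y})" by (rule sum_mono) (use assms in auto)
  also have "\<dots> = (\<Sum>x\<in>X. \<Sum>y\<in>{y \<in> Y. R x y}. 1)" by simp
  also have "\<dots> = (\<Sum>y\<in>Y. \<Sum>x | x \<in> X \<and> R x y. 1)"
    by (rule sum.swap_restrict) (use assms in auto)
  also have "\<dots> = (\<Sum>y\<in>Y. card {x \<in> X. R x y})" by simp
  also have "\<dots> \<le> (\<Sum>y\<in>Y. b)" by (rule sum_mono) (use assms in auto)
  also have "\<dots> = b * card Y" by simp
  finally show ?thesis .
qed

definition "achain le B \<longleftrightarrow> (\<forall>x\<in>B. \<forall>y\<in>B. x \<noteq> y \<longrightarrow> \<not> le x y)"

locale rposet =
  fixes V :: "'a set" and le :: "'a \<Rightarrow> 'a \<Rightarrow> bool" and r :: "'a \<Rightarrow> nat" and lo hi m :: nat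
  assumes finV: "finite V"
    and strict: "\<And>x y. x \<in> V \<Longrightarrow> y \<in> V \<Longrightarrow> le x y \<Longrightarrow> x \<noteq> y \<Longrightarrow> r x < r y"
    and trans: "\<And>x y z. x \<in> V \<Longrightarrow> y \<in> V \<Longrightarrow> z \<in> V \<Longrightarrow> le x y \<Longrightarrow> le y z \<Longrightarrow> le x z"
    and rng: "\<And>x. x \<in> V \<Longrightarrow> lo \<le> r x \<and> r x \<le> hi"
    and mrng: "lo \<le> m" "m \<le> hi"
    and upexp: "\<And>j X. lo \<le> j \<Longrightarrow> j < m \<Longrightarrow> X \<subseteq> {x\<in>V. r x = j} \<Longrightarrow>
        card X \<le> card {y \<in> V. r y = Suc j \<and> (\<exists>x\<in>X. le x y)}"
    and downexp: "\<And>j X. m < j \<Longrightarrow> j \<le> hi \<Longrightarrow> X \<subseteq> {x\<in>V. r x = j} \<Longrightarrow>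
        card X \<le> card {y \<in> V. Suc (r y) = j \<and> (\<exists>x\<in>X. le y x)}"
begin

lemma phase1:
  "\<forall>a B. m - a = d \<longrightarrow> a \<le> m \<longrightarrow> B \<subseteq> V \<longrightarrow> achain le B \<longrightarrow> (\<forall>b\<in>B. a \<le> r b) \<longrightarrow>
     (\<exists>B'. B' \<subseteq> V \<and> achain le B' \<and> (\<forall>b\<in>B'. m \<le> r b) \<and> card B \<le> card B')"
proof (induction d)
  case 0
  then show ?case by (metis diff_is_0_eq le_antisym order.trans order_refl)
next
  case (Suc d)
  show ?case
  proof (intro allI impI)
    fix a B assume md: "m - a = Suc d" and am: "a \<le> m" and BV: "B \<subseteq> V" and ac: "achain le B"
      and ra: "\<forall>b\<in>B. a \<le> r b"
    have d1: "m - Suc a = d" "Suc a \<le> m" using md by auto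
    show "\<exists>B'. B' \<subseteq> V \<and> achain le B' \<and> (\<forall>b\<in>B'. m \<le> r b) \<and> card B \<le> card B'"
    proof (cases "a < lo")
      case True
      then have "\<forall>b\<in>B. Suc a \<le> r b" using rng BV by (meson Suc_leI order.strict_trans2 subsetD)
      then show ?thesis using Suc.IH d1 BV ac by blast
    next
      case False
      define X where "X = {b \<in> B. r b = a}"
      define U where "U = {y \<in> V. r y = Suc a \<and> (\<exists>x\<in>X. le x y)}"
      define B1 where "B1 = (B - X) \<union> U"
      have finB: "finite B" using BV finV finite_subset by blast
      have XV: "X \<subseteq> {x\<in>V. r x = a}" using BV X_def by auto
      have cX: "card X \<le> card U" unfolding U_def
        by (rule upexp) (use False md XV in auto)
      have finU: "finite U" using finV U_def by auto
      have disj: "(B - X) \<inter> U = {}"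
      proof -
        { fix y assume y: "y \<in> B" "y \<in> U"
          then obtain x where x: "x \<in> X" "le x y" "r y = Suc a" unfolding U_def by auto
          have "x \<in> B" "r x = a" using x X_def by auto
          then have "x \<noteq> y" using x by auto
          then have False using ac y x \<open>x \<in> B\<close> unfolding achain_def by blast }
        then show ?thesis by blast
      qed
      have "card B = card (B - X) + card X"
        using finB X_def by (metis card_Diff_subset card_mono diff_add_inverse2 finite_subset le_add_diff_inverse2 mem_Collect_eq subsetI)
      also have "\<dots> \<le> card (B - X) + card U" using cX by simp
      also have "\<dots> = card B1" unfolding B1_def using disj finB finU by (simp add: card_Un_disjoint)
      finally have cB: "card B \<le> card B1" .
      have B1V: "B1 \<subseteq> V" unfolding B1_def U_def using BV by auto
      have ac1: "achain le B1" unfolding achain_def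
      proof (intro ballI impI)
        fix x y assume x: "x \<in> B1" and y: "y \<in> B1" and xy: "x \<noteq> y"
        show "\<not> le x y"
        proof
          assume lxy: "le x y"
          have xV: "x \<in> V" and yV: "y \<in> V" using x y B1V by auto
          have rxy: "r x < r y" using strict[OF xV yV lxy xy] .
          consider "x \<in> B - X" "y \<in> B - X" | "x \<in> B - X" "y \<in> U" | "x \<in> U" "y \<in> B - X" | "x \<in> U" "y \<in> U"
            using x y B1_def by blast
          then show False
          proof cases
            case 1 then show ?thesis using ac lxy xy unfolding achain_def by blast
          next
            case 2
            then have "r x \<ge> a" "r x \<noteq> a" using ra X_def by auto
            moreover have "r y = Suc a" using 2 U_def by auto
            ultimately show ?thesis using rxy by linarith
          next
            case 3
            then obtain z where z: "z \<in> X" "le z x" unfolding U_def by auto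
            have zB: "z \<in> B" "z \<in> V" using z X_def BV by auto
            have "le z y" using trans[OF \<open>z \<in> V\<close> xV yV] z lxy by blast
            moreover have "z \<noteq> y" using z 3 by auto
            ultimately show ?thesis using ac zB 3 unfolding achain_def by blast
          next
            case 4 then show ?thesis using rxy U_def by auto
          qed
        qed
      qed
      have r1: "\<forall>b\<in>B1. Suc a \<le> r b"
      proof
        fix b assume "b \<in> B1"
        then show "Suc a \<le> r b" unfolding B1_def U_def X_def using ra
          by (metis (mono_tags, lifting) DiffE Suc_leI le_neq_implies_less mem_Collect_eq order.eq_iff sup.boundedE Un_iff)
      qed
      obtain B' where "B' \<subseteq> V" "achain le B'" "\<forall>b\<in>B'. m \<le> r b" "card B1 \<le> card B'"
        using Suc.IH d1 B1V ac1 r1 by blast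
      then show ?thesis using cB by (meson order.trans)
    qed
  qed
qed

lemma phase2:
  "\<forall>c B. c - m = d \<longrightarrow> m \<le> c \<longrightarrow> B \<subseteq> V \<longrightarrow> achain le B \<longrightarrow> (\<forall>b\<in>B. m \<le> r b \<and> r b \<le> c) \<longrightarrow>
     card B \<le> card {x \<in> V. r x = m}"
proof (induction d)
  case 0
  show ?case
  proof (intro allI impI)
    fix c B assume "c - m = 0" "m \<le> c" "B \<subseteq> V" "\<forall>b\<in>B. m \<le> r b \<and> r b \<le> c"
    then have "B \<subseteq> {x \<in> V. r x = m}" by force
    then show "card B \<le> card {x \<in> V. r x = m}" by (rule card_mono[rotated]) (use finV in auto)
  qed
next
  case (Suc d)
  show ?case
  proof (intro allI impI)
    fix c B assume md: "c - m = Suc d" and am: "m \<le> c" and BV: "B \<subseteq> V" and ac: "achain le B"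
      and ra: "\<forall>b\<in>B. m \<le> r b \<and> r b \<le> c"
    have d1: "(c - 1) - m = d" "m \<le> c - 1" using md by auto
    show "card B \<le> card {x \<in> V. r x = m}"
    proof (cases "hi < c")
      case True
      then have "\<forall>b\<in>B. m \<le> r b \<and> r b \<le> c - 1" using rng BV ra by fastforce
      then show ?thesis using Suc.IH d1 BV ac by blast
    next
      case False
      define X where "X = {b \<in> B. r b = c}"
      define U where "U = {y \<in> V. Suc (r y) = c \<and> (\<exists>x\<in>X. le y x)}"
      define B1 where "B1 = (B - X) \<union> U"
      have finB: "finite B" using BV finV finite_subset by blast
      have XV: "X \<subseteq> {x\<in>V. r x = c}" using BV X_def by auto
      have cX: "card X \<le> card U" unfolding U_def
        by (rule downexp) (use False md XV in auto)
      have finU: "finite U" using finV U_def by auto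
      have disj: "(B - X) \<inter> U = {}"
      proof -
        { fix y assume y: "y \<in> B" "y \<in> U"
          then obtain x where x: "x \<in> X" "le y x" "Suc (r y) = c" unfolding U_def by auto
          have "x \<in> B" "r x = c" using x X_def by auto
          then have "y \<noteq> x" using x by auto
          then have False using ac y x \<open>x \<in> B\<close> unfolding achain_def by metis }
        then show ?thesis by blast
      qed
      have "card B = card (B - X) + card X"
        using finB X_def by (metis card_Diff_subset card_mono diff_add_inverse2 finite_subset le_add_diff_inverse2 mem_Collect_eq subsetI)
      also have "\<dots> \<le> card (B - X) + card U" using cX by simp
      also have "\<dots> = card B1" unfolding B1_def using disj finB finU by (simp add: card_Un_disjoint)
      finally have cB: "card B \<le> card B1" .
      have B1V: "B1 \<subseteq> V" unfolding B1_def U_def using BV by auto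
      have ac1: "achain le B1" unfolding achain_def
      proof (intro ballI impI)
        fix x y assume x: "x \<in> B1" and y: "y \<in> B1" and xy: "x \<noteq> y"
        show "\<not> le x y"
        proof
          assume lxy: "le x y"
          have xV: "x \<in> V" and yV: "y \<in> V" using x y B1V by auto
          have rxy: "r x < r y" using strict[OF xV yV lxy xy] .
          consider "x \<in> B - X" "y \<in> B - X" | "y \<in> B - X" "x \<in> U" | "y \<in> U" "x \<in> B - X" | "x \<in> U" "y \<in> U"
            using x y B1_def by blast
          then show False
          proof cases
            case 1 then show ?thesis using ac lxy xy unfolding achain_def by blast
          next
            case 2
            then have "r y \<le> c" "r y \<noteq> c" using ra X_def by auto
            moreover have "Suc (r x) = c" using 2 U_def by auto
            ultimately show ?thesis using rxy by linarith
          next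
            case 3
            then obtain z where z: "z \<in> X" "le y z" unfolding U_def by auto
            have zB: "z \<in> B" "z \<in> V" using z X_def BV by auto
            have "le x z" using trans[OF xV yV \<open>z \<in> V\<close>] z lxy by blast
            moreover have "z \<noteq> x" using z 3 by auto
            ultimately show ?thesis using ac zB 3 unfolding achain_def by (metis DiffD1)
          next
            case 4 then show ?thesis using rxy U_def by auto
          qed
        qed
      qed
      have r1: "\<forall>b\<in>B1. m \<le> r b \<and> r b \<le> c - 1"
      proof
        fix b assume b: "b \<in> B1"
        show "m \<le> r b \<and> r b \<le> c - 1"
        proof (cases "b \<in> U")
          case True then show ?thesis using U_def md by auto
        next
          case False then have "b \<in> B" "r b \<noteq> c" using b B1_def X_def by auto
          then show ?thesis using ra by force
        qed
      qed
      have "card B1 \<le> card {x \<in> V. r x = m}"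
        using Suc.IH d1 B1V ac1 r1 by blast
      then show ?thesis using cB by (meson order.trans)
    qed
  qed
qed

theorem sperner:
  assumes "B \<subseteq> V" "achain le B"
  shows "card B \<le> card {x \<in> V. r x = m}"
proof -
  obtain B' where B': "B' \<subseteq> V" "achain le B'" "\<forall>b\<in>B'. m \<le> r b" "card B \<le> card B'"
    using phase1[rule_format, where d="m - lo" and a=lo and B=B] assms mrng rng by (meson subsetD)
  have "card B' \<le> card {x \<in> V. r x = m}"
    using phase2[rule_format, where c=hi and d="hi - m" and B=B'] B' rng mrng by (meson subsetD)
  then show ?thesis using B' by linarith
qed

end


lemma cover_aux:
  assumes "finite T'" "T \<subseteq> T'" "card T' = card T + 1"
  shows "\<exists>z\<in>T'. z \<notin> T \<and> T = T' - {z}"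
proof -
  have "T \<noteq> T'" using assms by auto
  then obtain z where z: "z \<in> T'" "z \<notin> T" using assms by blast
  have c: "card (T' - {z}) = card T" using z assms by (simp add: card_Diff_singleton)
  have "T \<subseteq> T' - {z}" using z assms by blast
  then have "T = T' - {z}" using card_subset_eq[of "T' - {z}" T] c assms by simp
  then show ?thesis using z by blast
qed

lemma cover_lemma:
  assumes "finite S'" "finite T'" "S \<subseteq> S'" "T \<subseteq> T'" "S' \<inter> T' = {}"
    "card S + card T + 1 = card S' + card T'"
  shows "\<exists>z \<in> S' \<union> T'. S = S' - {z} \<and> T = T' - {z}"
proof -
  have c1: "card S \<le> card S'" "card T \<le> card T'" using assms card_mono by auto
  show ?thesis
  proof (cases "card S = card S'")
    case True
    then have SS: "S = S'" using card_subset_eq[of S' S] assms by simp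
    have "card T' = card T + 1" using assms True by simp
    then obtain z where z: "z \<in> T'" "z \<notin> T" "T = T' - {z}" using cover_aux[of T' T] assms by blast
    have "z \<notin> S'" using z assms by blast
    then have "S = S' - {z}" using SS by simp
    then show ?thesis using z by blast
  next
    case False
    then have "card T' = card T" "card S' = card S + 1" using assms c1 by linarith+
    then have TT: "T = T'" using card_subset_eq[of T' T] assms by simp
    obtain z where z: "z \<in> S'" "z \<notin> S" "S = S' - {z}"
      using cover_aux[of S' S] assms \<open>card S' = card S + 1\<close> by blast
    have "z \<notin> T'" using z assms by blast
    then have "T = T' - {z}" using TT by simp
    then show ?thesis using z by blast
  qed
qed

definition VP :: "('n::finite set \<times> 'n set) set" where
  "VP = {(S,T). S \<noteq> {} \<and> T \<noteq> {} \<and> S \<inter> T = {}}"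

definition lep :: "'n set \<times> 'n set \<Rightarrow> 'n set \<times> 'n set \<Rightarrow> bool" where
  "lep x y \<longleftrightarrow> fst x \<subseteq> fst y \<and> snd x \<subseteq> snd y"

definition rk :: "'n::finite set \<times> 'n set \<Rightarrow> nat" where
  "rk x = card (fst x) + card (snd x)"

lemma VP_iff[simp]: "(S,T) \<in> VP \<longleftrightarrow> S \<noteq> {} \<and> T \<noteq> {} \<and> S \<inter> T = {}"
  unfolding VP_def by simp

lemma rk_simp[simp]: "rk (S,T) = card S + card T"
  unfolding rk_def by simp

lemma lep_simp[simp]: "lep (S,T) (S',T') \<longleftrightarrow> S \<subseteq> S' \<and> T \<subseteq> T'"
  unfolding lep_def by simp

lemma rk_le: "x \<in> VP \<Longrightarrow> rk (x::'n::finite set \<times> 'n set) \<le> card (UNIV::'n set)"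
proof (cases x)
  case (Pair S T)
  assume "x \<in> VP"
  then have "S \<inter> T = {}" using Pair by simp
  then have "rk x = card (S \<union> T)" using Pair by (simp add: card_Un_disjoint)
  also have "\<dots> \<le> card (UNIV::'n set)" by (rule card_mono) auto
  finally show ?thesis .
qed

lemma rk_ge: "x \<in> VP \<Longrightarrow> 2 \<le> rk (x :: 'n::finite set \<times> 'n set)"
proof (cases x)
  case (Pair S T)
  assume "x \<in> VP"
  then have "S \<noteq> {}" "T \<noteq> {}" using Pair by auto
  then have "card S \<ge> 1" "card T \<ge> 1" by (simp_all add: Suc_le_eq card_gt_0_iff)
  then show ?thesis using Pair by simp
qed

lemma finite_VP: "finite (VP :: ('n::finite set \<times> 'n set) set)"
  by simp

lemma strict_VP:
  assumes "x \<in> VP" "y \<in> VP" "lep x y" "x \<noteq> y"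
  shows "rk x < rk (y::'n::finite set \<times> 'n set)"
proof -
  obtain S T S' T' where xy: "x = (S,T)" "y = (S',T')" by (cases x, cases y)
  have s: "S \<subseteq> S'" "T \<subseteq> T'" using assms xy by auto
  have c: "card S \<le> card S'" "card T \<le> card T'" using s by (auto intro: card_mono)
  show ?thesis
  proof (cases "S = S'")
    case True
    then have "T \<subset> T'" using s assms xy by auto
    then have "card T < card T'" by (simp add: psubset_card_mono)
    then show ?thesis using xy c True by simp
  next
    case False
    then have "S \<subset> S'" using s by auto
    then have "card S < card S'" by (simp add: psubset_card_mono)
    then show ?thesis using xy c by simp
  qed
qed

lemma upexp_VP:
  fixes X :: "('n::finite set \<times> 'n set) set"
  assumes X: "X \<subseteq> {x \<in> VP. rk x = j}" and j: "j + 1 \<le> 2 * (card (UNIV::'n set) - j)"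
  shows "card X \<le> card {y \<in> VP. rk y = Suc j \<and> (\<exists>x\<in>X. lep x y)}"
proof -
  define Y where "Y = {y \<in> VP. rk y = Suc j \<and> (\<exists>x\<in>X. lep x y)}"
  have "(2 * (card (UNIV::'n set) - j)) * card X \<le> (j + 1) * card Y"
  proof (rule double_count[where R = lep])
    show "finite X" "finite Y" by auto
  next
    fix x assume xX: "x \<in> X"
    obtain S T where x: "x = (S,T)" by (cases x)
    have "x \<in> {x \<in> VP. rk x = j}" using xX X by blast
    then have "(S,T) \<in> VP" "rk (S,T) = j" using x by auto
    then have xv: "S \<noteq> {}" "T \<noteq> {}" "S \<inter> T = {}" "card S + card T = j" by auto
    define A1 where "A1 = (\<lambda>z. (insert z S, T)) ` (- (S \<union> T))"
    define A2 where "A2 = (\<lambda>z. (S, insert z T)) ` (- (S \<union> T))"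
    have cC: "card (- (S \<union> T)) = card (UNIV::'n set) - j"
    proof -
      have "card (- (S \<union> T)) = card (UNIV::'n set) - card (S \<union> T)"
        by (simp add: Compl_eq_Diff_UNIV card_Diff_subset)
      then show ?thesis using xv by (simp add: card_Un_disjoint)
    qed
    have c1: "card A1 = card (UNIV::'n set) - j" unfolding A1_def using cC
      by (subst card_image) (auto simp: inj_on_def)
    have c2: "card A2 = card (UNIV::'n set) - j" unfolding A2_def using cC
      by (subst card_image) (auto simp: inj_on_def)
    have dj: "A1 \<inter> A2 = {}" unfolding A1_def A2_def by auto
    have sub: "A1 \<union> A2 \<subseteq> {y \<in> Y. lep x y}"
    proof
      fix y assume "y \<in> A1 \<union> A2"
      then obtain z where z: "z \<notin> S" "z \<notin> T" "y = (insert z S, T) \<or> y = (S, insert z T)"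
        unfolding A1_def A2_def by auto
      have "rk y = Suc j" using z xv by auto
      moreover have "y \<in> VP" using z xv by auto
      moreover have "lep x y" using z x by auto
      ultimately show "y \<in> {y \<in> Y. lep x y}" unfolding Y_def using xX by auto
    qed
    have "card (A1 \<union> A2) = 2 * (card (UNIV::'n set) - j)" using c1 c2 dj by (simp add: card_Un_disjoint)
    then show "2 * (card (UNIV::'n set) - j) \<le> card {y \<in> Y. lep x y}"
      using sub by (metis card_mono finite)
  next
    fix y assume yY: "y \<in> Y"
    obtain S' T' where y: "y = (S',T')" by (cases y)
    have "(S',T') \<in> VP" "rk (S',T') = Suc j" using yY y Y_def by auto
    then have yv: "S' \<inter> T' = {}" "card S' + card T' = Suc j" by auto
    have "{x \<in> X. lep x y} \<subseteq> (\<lambda>z. (S' - {z}, T' - {z})) ` (S' \<union> T')"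
    proof
      fix x assume xX: "x \<in> {x \<in> X. lep x y}"
      obtain S T where x: "x = (S,T)" by (cases x)
      have "(S,T) \<in> X" "lep (S,T) (S',T')" using xX x y by auto
      then have "rk (S,T) = j" using X by auto
      then have "S \<subseteq> S'" "T \<subseteq> T'" "card S + card T + 1 = card S' + card T'"
        using \<open>lep (S,T) (S',T')\<close> yv by auto
      then obtain z where "z \<in> S' \<union> T'" "S = S' - {z}" "T = T' - {z}"
        using cover_lemma[of S' T' S T] yv by auto
      then show "x \<in> (\<lambda>z. (S' - {z}, T' - {z})) ` (S' \<union> T')" using x by auto
    qed
    then have "card {x \<in> X. lep x y} \<le> card (S' \<union> T')"
      by (meson card_image_le card_mono finite order.trans)
    also have "\<dots> = j + 1" using yv by (simp add: card_Un_disjoint)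
    finally show "card {x \<in> X. lep x y} \<le> j + 1" .
  qed
  then have "(j+1) * card X \<le> (j + 1) * card Y" using j
    by (meson le_trans mult_le_mono1)
  then have "card X \<le> card Y" by (metis Suc_eq_plus1 Suc_mult_le_cancel1)
  then show ?thesis unfolding Y_def .
qed

lemma card_compl_pair:
  fixes S T :: "'n::finite set"
  assumes "S \<inter> T = {}"
  shows "card (- (S \<union> T)) = card (UNIV::'n::finite set) - (card S + card T)"
proof -
  have "card (- (S \<union> T)) = card (UNIV::'n set) - card (S \<union> T)"
    by (simp add: Compl_eq_Diff_UNIV card_Diff_subset)
  then show ?thesis using assms by (simp add: card_Un_disjoint)
qed

lemma downexp_VP:
  fixes X :: "('n::finite set \<times> 'n set) set"
  assumes X: "X \<subseteq> {x \<in> VP. rk x = j}" and j3: "3 \<le> j" and j: "2 * (card (UNIV::'n set) - (j - 1)) \<le> j - 1"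
  shows "card X \<le> card {y \<in> VP. Suc (rk y) = j \<and> (\<exists>x\<in>X. lep y x)}"
proof -
  define Y where "Y = {y \<in> VP. Suc (rk y) = j \<and> (\<exists>x\<in>X. lep y x)}"
  have "(j - 1) * card X \<le> (2 * (card (UNIV::'n set) - (j - 1))) * card Y"
  proof (rule double_count[where R = "\<lambda>x y. lep y x"])
    show "finite X" "finite Y" by auto
  next
    fix x assume xX: "x \<in> X"
    obtain S T where x: "x = (S,T)" by (cases x)
    have "x \<in> {x \<in> VP. rk x = j}" using xX X by blast
    then have "(S,T) \<in> VP" "rk (S,T) = j" using x by auto
    then have xv: "S \<noteq> {}" "T \<noteq> {}" "S \<inter> T = {}" "card S + card T = j" by auto
    have cS: "card S \<ge> 1" "card T \<ge> 1" using xv by (simp_all add: Suc_le_eq card_gt_0_iff)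
    define A1 where "A1 = (if card S \<ge> 2 then (\<lambda>z. (S - {z}, T)) ` S else {})"
    define A2 where "A2 = (if card T \<ge> 2 then (\<lambda>z. (S, T - {z})) ` T else {})"
    have i1: "inj_on (\<lambda>z. (S - {z}, T)) S" unfolding inj_on_def by blast
    have i2: "inj_on (\<lambda>z. (S, T - {z})) T" unfolding inj_on_def by blast
    have c1: "card A1 = (if card S \<ge> 2 then card S else 0)" unfolding A1_def
      using card_image[OF i1] by auto
    have c2: "card A2 = (if card T \<ge> 2 then card T else 0)" unfolding A2_def
      using card_image[OF i2] by auto
    have dj: "A1 \<inter> A2 = {}" unfolding A1_def A2_def by auto
    have sub: "A1 \<union> A2 \<subseteq> {y \<in> Y. lep y x}"
    proof
      fix y assume "y \<in> A1 \<union> A2"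
      then obtain z where z: "(z \<in> S \<and> card S \<ge> 2 \<and> y = (S - {z}, T)) \<or> (z \<in> T \<and> card T \<ge> 2 \<and> y = (S, T - {z}))"
        unfolding A1_def A2_def by (auto split: if_splits)
      have "y \<in> VP \<and> Suc (rk y) = j"
      proof (cases "z \<in> S \<and> card S \<ge> 2 \<and> y = (S - {z}, T)")
        case True
        then have "card (S - {z}) = card S - 1" by (simp add: card_Diff_singleton)
        then have "card (S - {z}) \<ge> 1" using True by linarith
        then have "S - {z} \<noteq> {}" by (metis card.empty not_one_le_zero)
        then show ?thesis using True xv \<open>card (S - {z}) = card S - 1\<close> by auto
      next
        case False
        then have F: "z \<in> T" "card T \<ge> 2" "y = (S, T - {z})" using z by auto
        then have "card (T - {z}) = card T - 1" by (simp add: card_Diff_singleton)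
        then have "card (T - {z}) \<ge> 1" using F by linarith
        then have "T - {z} \<noteq> {}" by (metis card.empty not_one_le_zero)
        then show ?thesis using F xv \<open>card (T - {z}) = card T - 1\<close> by auto
      qed
      moreover have "lep y x" using z x by auto
      ultimately show "y \<in> {y \<in> Y. lep y x}" unfolding Y_def using xX by auto
    qed
    have u: "card (A1 \<union> A2) = card A1 + card A2" using dj by (simp add: card_Un_disjoint)
    have "card (A1 \<union> A2) \<ge> j - 1" unfolding u using c1 c2 cS xv j3
      by (cases "2 \<le> card S"; cases "2 \<le> card T") auto
    then show "j - 1 \<le> card {y \<in> Y. lep y x}"
      using sub by (meson card_mono finite order.trans)
  next
    fix y assume yY: "y \<in> Y"
    obtain S T where y: "y = (S,T)" by (cases y)
    have "(S,T) \<in> VP" "Suc (rk (S,T)) = j" using yY y Y_def by auto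
    then have yv: "S \<inter> T = {}" "Suc (card S + card T) = j" by auto
    have "{x \<in> X. lep y x} \<subseteq> (\<lambda>z. (insert z S, T)) ` (- (S \<union> T)) \<union> (\<lambda>z. (S, insert z T)) ` (- (S \<union> T))"
    proof
      fix x assume xX: "x \<in> {x \<in> X. lep y x}"
      obtain S' T' where x: "x = (S',T')" by (cases x)
      have "x \<in> {x \<in> VP. rk x = j}" using xX X by blast
      then have "(S',T') \<in> VP" "rk (S',T') = j" using x by auto
      moreover have "lep (S,T) (S',T')" using xX x y by auto
      ultimately have h: "S \<subseteq> S'" "T \<subseteq> T'" "card S + card T + 1 = card S' + card T'" "S' \<inter> T' = {}"
        using yv by auto
      then obtain z where z: "z \<in> S' \<union> T'" "S = S' - {z}" "T = T' - {z}"
        using cover_lemma[of S' T' S T] by auto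
      show "x \<in> (\<lambda>z. (insert z S, T)) ` (- (S \<union> T)) \<union> (\<lambda>z. (S, insert z T)) ` (- (S \<union> T))"
      proof (cases "z \<in> S'")
        case True
        then have "z \<notin> T'" using h by blast
        then have "S' = insert z S" "T' = T" "z \<notin> S \<union> T" using True z by auto
        then show ?thesis using x by auto
      next
        case False
        then have "z \<in> T'" using z by blast
        then have "T' = insert z T" "S' = S" "z \<notin> S \<union> T" using False z by auto
        then show ?thesis using x by auto
      qed
    qed
    then have "card {x \<in> X. lep y x} \<le> card ((\<lambda>z. (insert z S, T)) ` (- (S \<union> T)) \<union> (\<lambda>z. (S, insert z T)) ` (- (S \<union> T)))"
      by (meson card_mono finite)
    also have "\<dots> \<le> card ((\<lambda>z. (insert z S, T)) ` (- (S \<union> T))) + card ((\<lambda>z. (S, insert z T)) ` (- (S \<union> T)))"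
      by (rule card_Un_le)
    also have "\<dots> \<le> card (- (S \<union> T)) + card (- (S \<union> T))"
      by (intro add_mono card_image_le) auto
    also have "\<dots> = 2 * (card (UNIV::'n set) - (j - 1))"
      using card_compl_pair[OF yv(1)] yv(2) by simp
    finally show "card {x \<in> X. lep y x} \<le> 2 * (card (UNIV::'n set) - (j - 1))" .
  qed
  then have "(j - 1) * card X \<le> (j - 1) * card Y" using j
    by (meson le_trans mult_le_mono1)
  then have "card X \<le> card Y" using j3 by simp
  then show ?thesis unfolding Y_def .
qed

theorem sperner_VP:
  assumes N2: "2 \<le> card (UNIV::'n::finite set)"
    and B: "B \<subseteq> (VP :: ('n set \<times> 'n set) set)" "achain lep B"
  shows "card B \<le> card {x \<in> (VP :: ('n set \<times> 'n set) set). rk x = card (UNIV::'n set) - card (UNIV::'n set) div 3}"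
proof -
  define N where "N = card (UNIV::'n set)"
  have dm: "N div 3 * 3 + N mod 3 = N" "N mod 3 < 3" by simp_all
  interpret rposet "VP :: ('n set \<times> 'n set) set" lep rk 2 N "N - N div 3"
  proof
    show "finite (VP :: ('n set \<times> 'n set) set)" by simp
  next
    fix x y :: "'n set \<times> 'n set"
    assume "x \<in> VP" "y \<in> VP" "lep x y" "x \<noteq> y"
    then show "rk x < rk y" by (rule strict_VP)
  next
    fix x y z :: "'n set \<times> 'n set"
    assume "lep x y" "lep y z" then show "lep x z" unfolding lep_def by auto
  next
    fix x :: "'n set \<times> 'n set" assume "x \<in> VP"
    then show "2 \<le> rk x \<and> rk x \<le> N" using rk_ge[of x] rk_le[of x] N_def by blast
  next
    show "2 \<le> N - N div 3" "N - N div 3 \<le> N" using N2 dm unfolding N_def by linarith+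
  next
    fix j and X :: "('n set \<times> 'n set) set"
    assume "2 \<le> j" "j < N - N div 3" "X \<subseteq> {x \<in> VP. rk x = j}"
    moreover have "j + 1 \<le> 2 * (card (UNIV::'n set) - j)" using calculation dm unfolding N_def by linarith
    ultimately show "card X \<le> card {y \<in> VP. rk y = Suc j \<and> (\<exists>x\<in>X. lep x y)}"
      using upexp_VP by blast
  next
    fix j and X :: "('n set \<times> 'n set) set"
    assume "N - N div 3 < j" "j \<le> N" "X \<subseteq> {x \<in> VP. rk x = j}"
    moreover have "3 \<le> j" "2 * (card (UNIV::'n set) - (j - 1)) \<le> j - 1"
      using calculation dm N2 unfolding N_def by linarith+
    ultimately show "card X \<le> card {y \<in> VP. Suc (rk y) = j \<and> (\<exists>x\<in>X. lep y x)}"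
      using downexp_VP by blast
  qed
  have "card B \<le> card {x \<in> (VP::('n set \<times> 'n set) set). rk x = N - N div 3}" by (rule sperner[OF B])
  then show ?thesis unfolding N_def .
qed



lemma P_iff: "(x::real^'n) \<in> Pspread \<longleftrightarrow> (\<forall>i j. x$i - x$j \<le> 2)"
proof -
  define f where "f = (\<lambda>i. x$i)"
  have fin: "finite (range f)" "range f \<noteq> {}" by auto
  have "x \<in> Pspread \<longleftrightarrow> Max (range f) - Min (range f) \<le> 2"
    unfolding Pspread_def f_def by auto
  also have "\<dots> \<longleftrightarrow> (\<forall>i j. f i - f j \<le> 2)"
  proof
    assume h: "Max (range f) - Min (range f) \<le> 2"
    show "\<forall>i j. f i - f j \<le> 2"
    proof (intro allI)
      fix i j
      have "f i \<le> Max (range f)" "Min (range f) \<le> f j" using fin by auto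
      then show "f i - f j \<le> 2" using h by linarith
    qed
  next
    assume h: "\<forall>i j. f i - f j \<le> 2"
    have "Max (range f) \<in> range f" "Min (range f) \<in> range f" using fin by (metis Max_in, metis Min_in)
    then obtain i j where "Max (range f) = f i" "Min (range f) = f j" by blast
    then show "Max (range f) - Min (range f) \<le> 2" using h by simp
  qed
  finally show ?thesis unfolding f_def .
qed

definition fc :: "'n set \<Rightarrow> 'n set \<Rightarrow> (real^'n) set" where
  "fc S T = {x. (\<forall>i j. x$i - x$j \<le> 2) \<and> (\<forall>i\<in>S. \<forall>j\<in>T. x$i - x$j = 2)}"

definition gp :: "'n set \<Rightarrow> 'n set \<Rightarrow> real^'n" where
  "gp S T = (\<chi> i. if i \<in> S then 2 else if i \<in> T then 0 else 1)"

lemma fc_sub: "fc S T \<subseteq> Pspread"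
  by (auto simp: fc_def P_iff)

lemma fc_mono: "S' \<subseteq> S \<Longrightarrow> T' \<subseteq> T \<Longrightarrow> fc S T \<subseteq> fc S' T'"
  unfolding fc_def by blast

lemma neg_fc: "uminus ` fc S T = fc T S"
proof
  show "uminus ` fc S T \<subseteq> fc T S" unfolding fc_def by auto
next
  show "fc T S \<subseteq> uminus ` fc S T"
  proof
    fix x assume "x \<in> fc T S"
    then have "-x \<in> fc S T" unfolding fc_def by auto
    then show "x \<in> uminus ` fc S T" by (metis image_eqI minus_minus)
  qed
qed

lemma gp_in_iff:
  assumes "S \<inter> T = {}" "S' \<noteq> {}" "T' \<noteq> {}"
  shows "gp S T \<in> fc S' T' \<longleftrightarrow> S' \<subseteq> S \<and> T' \<subseteq> T"
proof
  assume h: "gp S T \<in> fc S' T'"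
  have "\<forall>i\<in>S'. \<forall>j\<in>T'. i \<in> S \<and> j \<in> T"
  proof (intro ballI)
    fix i j assume "i \<in> S'" "j \<in> T'"
    then have "(gp S T)$i - (gp S T)$j = 2" using h unfolding fc_def by auto
    then show "i \<in> S \<and> j \<in> T" unfolding gp_def using assms(1)
      by (auto split: if_splits)
  qed
  then show "S' \<subseteq> S \<and> T' \<subseteq> T" using assms by blast
next
  assume "S' \<subseteq> S \<and> T' \<subseteq> T"
  then show "gp S T \<in> fc S' T'" unfolding fc_def gp_def using assms(1) by auto
qed

lemma gp_in: "S \<inter> T = {} \<Longrightarrow> gp S T \<in> fc S T"
  unfolding fc_def gp_def by auto

lemma zero_notin: "S \<noteq> {} \<Longrightarrow> T \<noteq> {} \<Longrightarrow> (0::real^'n) \<notin> fc S T"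
  unfolding fc_def by auto

lemma zero_in: "(0::real^'n) \<in> Pspread"
  unfolding P_iff by auto

lemma fc_proper:
  fixes S T :: "'n::finite set"
  assumes "(S,T) \<in> VP"
  shows "proper_face Pspread (fc S T)"
proof -
  have v: "S \<noteq> {}" "T \<noteq> {}" "S \<inter> T = {}" using assms by auto
  define b :: "real^'n" where "b = (\<Sum>p\<in>S \<times> T. axis (fst p) 1 - axis (snd p) 1)"
  define c :: real where "c = 2 * real (card (S \<times> T))"
  have ib: "inner b x = (\<Sum>p\<in>S \<times> T. x$fst p - x$snd p)" for x
    unfolding b_def by (simp add: inner_sum_left inner_diff_left inner_axis')
  have le: "inner b x \<le> c" if "x \<in> Pspread" for x
  proof -
    have "inner b x \<le> (\<Sum>p\<in>S \<times> T. 2)" unfolding ib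
      by (rule sum_mono) (use that in \<open>auto simp: P_iff\<close>)
    then show ?thesis unfolding c_def by simp
  qed
  have eq: "fc S T = Pspread \<inter> {x. inner b x = c}"
  proof
    show "fc S T \<subseteq> Pspread \<inter> {x. inner b x = c}"
    proof
      fix x assume x: "x \<in> fc S T"
      have "inner b x = (\<Sum>p\<in>S \<times> T. 2)" unfolding ib
        by (rule sum.cong) (use x in \<open>auto simp: fc_def\<close>)
      then show "x \<in> Pspread \<inter> {x. inner b x = c}" using x fc_sub c_def by auto
    qed
  next
    show "Pspread \<inter> {x. inner b x = c} \<subseteq> fc S T"
    proof
      fix x assume x: "x \<in> Pspread \<inter> {x. inner b x = c}"
      then have xp: "\<forall>i j. x$i - x$j \<le> 2" by (simp add: P_iff)
      have "(\<Sum>p\<in>S \<times> T. 2 - (x$fst p - x$snd p)) = c - inner b x"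
        unfolding ib c_def by (simp add: sum_subtractf)
      then have "(\<Sum>p\<in>S \<times> T. 2 - (x$fst p - x$snd p)) = 0" using x by simp
      then have "\<forall>p\<in>S \<times> T. 2 - (x$fst p - x$snd p) = 0"
        using sum_nonneg_eq_0_iff[of "S \<times> T" "\<lambda>p. 2 - (x$fst p - x$snd p)"] xp by simp
      then show "x \<in> fc S T" unfolding fc_def using xp by force
    qed
  qed
  have ne: "fc S T \<noteq> {}" using gp_in[OF v(3)] by auto
  have np: "fc S T \<noteq> Pspread" using zero_in zero_notin[OF v(1,2)] by auto
  show ?thesis unfolding proper_face_def poly_face_def using eq ne np le by blast
qed

lemma generic_point:
  fixes F :: "(real^'n) set" and b :: "real^'n" and c :: real
  assumes FP: "F = Pspread \<inter> {x. inner b x = c}" and ne: "F \<noteq> {}"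
    and Q: "finite Q" "\<forall>(i,j)\<in>Q. \<exists>x\<in>F. x$i - x$j \<noteq> 2"
  shows "\<exists>x0\<in>F. \<exists>s>0. \<forall>(i,j)\<in>Q. x0$i - x0$j \<le> 2 - s"
  using Q
proof (induction Q rule: finite_induct)
  case empty
  obtain x where "x \<in> F" using ne by blast
  then show ?case by (intro bexI[of _ x] exI[of _ 1]) auto
next
  case (insert p Q)
  obtain i j where p: "p = (i,j)" by (cases p)
  obtain x1 s1 where x1: "x1 \<in> F" "s1 > 0" "\<forall>(i,j)\<in>Q. x1$i - x1$j \<le> 2 - s1"
    using insert by auto
  obtain x2 where x2: "x2 \<in> F" "x2$i - x2$j \<noteq> 2" using insert p by auto
  have x2P: "\<forall>a b. x2$a - x2$b \<le> 2" using x2 FP by (auto simp: P_iff)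
  define s2 where "s2 = 2 - (x2$i - x2$j)"
  have s2: "s2 > 0" using x2(2) x2P[rule_format, of i j] s2_def by linarith
  have x1P: "\<forall>a b. x1$a - x1$b \<le> 2" using x1 FP by (auto simp: P_iff)
  define x0 where "x0 = (1/2) *\<^sub>R (x1 + x2)"
  have x0c: "x0$a = (x1$a + x2$a) / 2" for a
    unfolding x0_def by simp
  have comp: "x0$a - x0$b = ((x1$a - x1$b) + (x2$a - x2$b)) / 2" for a b
    unfolding x0c by (simp add: field_simps)
  have "x0 \<in> Pspread" unfolding P_iff comp
  proof (intro allI)
    fix a b
    have "x1$a - x1$b \<le> 2" "x2$a - x2$b \<le> 2" using x1P x2P by auto
    then have "(x1$a - x1$b) + (x2$a - x2$b) \<le> 4" by linarith
    then show "((x1$a - x1$b) + (x2$a - x2$b)) / 2 \<le> 2" by simp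
  qed
  moreover have "inner b x0 = c"
  proof -
    have "inner b x1 = c" "inner b x2 = c" using x1 x2 FP by auto
    then show ?thesis unfolding x0_def by (simp add: inner_add_right)
  qed
  ultimately have x0F: "x0 \<in> F" using FP by auto
  define s where "s = min s1 s2 / 2"
  have "s > 0" using s2 x1 s_def by auto
  moreover have "\<forall>(a,b)\<in>insert p Q. x0$a - x0$b \<le> 2 - s"
  proof
    fix q assume q: "q \<in> insert p Q"
    obtain a b where ab: "q = (a,b)" by (cases q)
    show "case q of (a,b) \<Rightarrow> x0$a - x0$b \<le> 2 - s"
    proof (cases "q = p")
      case True
      then have "a = i" "b = j" using ab p by auto
      moreover have "s \<le> s2 / 2" unfolding s_def by simp
      moreover have "x1$a - x1$b \<le> 2" using x1P by auto
      ultimately have "x0$a - x0$b \<le> 2 - s" unfolding comp using s2_def by simp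
      then show ?thesis unfolding ab by simp
    next
      case False
      then have "(a,b) \<in> Q" using q ab by auto
      then have "x1$a - x1$b \<le> 2 - s1" using x1 by auto
      moreover have "s \<le> s1 / 2" unfolding s_def by simp
      moreover have "x2$a - x2$b \<le> 2" using x2P by auto
      ultimately have "x0$a - x0$b \<le> 2 - s" unfolding comp by simp
      then show ?thesis unfolding ab by simp
    qed
  qed
  ultimately show ?case using x0F by blast
qed

lemma proper_face_fc:
  fixes F :: "(real^'n::finite) set"
  assumes "proper_face Pspread F"
  shows "\<exists>S T. (S,T) \<in> VP \<and> F = fc S T"
proof -
  have pf: "poly_face Pspread F" "F \<noteq> Pspread" "F \<noteq> {}" using assms proper_face_def by auto
  then obtain b c where bc: "\<forall>x\<in>Pspread. inner b x \<le> c" "F = Pspread \<inter> {x. inner b x = c}"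
    unfolding poly_face_def by blast
  have FP: "\<forall>x\<in>F. \<forall>i j. x$i - x$j \<le> 2" using bc by (auto simp: P_iff)
  define R where "R = {(i,j). \<forall>x\<in>F. x$i - x$j = 2}"
  obtain x0 s where x0: "x0 \<in> F" "s > 0" "\<forall>(i,j)\<in>-R. x0$i - x0$j \<le> 2 - s"
    using generic_point[OF bc(2) pf(3), of "-R"] unfolding R_def by auto
  have x0P: "\<forall>i j. x0$i - x0$j \<le> 2" using FP x0 by auto
  have Fchar: "F = {y \<in> Pspread. \<forall>(i,j)\<in>R. y$i - y$j = 2}"
  proof
    show "F \<subseteq> {y \<in> Pspread. \<forall>(i,j)\<in>R. y$i - y$j = 2}" using bc R_def by auto
  next
    show "{y \<in> Pspread. \<forall>(i,j)\<in>R. y$i - y$j = 2} \<subseteq> F"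
    proof
      fix y assume y: "y \<in> {y \<in> Pspread. \<forall>(i,j)\<in>R. y$i - y$j = 2}"
      have yP: "\<forall>i j. y$i - y$j \<le> 2" using y by (auto simp: P_iff)
      define e where "e = s / 4"
      have e: "e > 0" using x0 e_def by auto
      define z where "z = (1 + e) *\<^sub>R x0 - e *\<^sub>R y"
      have zc: "z$i - z$j = (1 + e) * (x0$i - x0$j) - e * (y$i - y$j)" for i j
        unfolding z_def by (simp add: algebra_simps)
      have "\<forall>i j. z$i - z$j \<le> 2"
      proof (intro allI)
        fix i j
        show "z$i - z$j \<le> 2"
        proof (cases "(i,j) \<in> R")
          case True
          then have "x0$i - x0$j = 2" "y$i - y$j = 2" using x0 y R_def by auto
          then show ?thesis unfolding zc by simp
        next
          case False
          then have d: "x0$i - x0$j \<le> 2 - s" using x0 by auto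
          have "y$j - y$i \<le> 2" using yP by auto
          have "(1 + e) * (x0$i - x0$j) \<le> (1 + e) * (2 - s)"
            using d e by (intro mult_left_mono) auto
          moreover have "e * (y$i - y$j) \<ge> e * (-2)"
            using \<open>y$j - y$i \<le> 2\<close> e by (intro mult_left_mono) auto
          moreover have "(1 + e) * (2 - s) = 2 - s + 2 * e - e * s" by (simp add: algebra_simps)
          moreover have "e * s \<ge> 0" using e x0(2) by simp
          moreover have "4 * e = s" using e_def by simp
          ultimately show ?thesis unfolding zc by linarith
        qed
      qed
      then have "z \<in> Pspread" by (simp add: P_iff)
      then have "inner b z \<le> c" using bc by auto
      moreover have "inner b x0 = c" using x0 bc by auto
      moreover have "inner b z = (1 + e) * inner b x0 - e * inner b y"
        unfolding z_def by (simp add: inner_diff_right)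
      moreover have "inner b y \<le> c" using y bc by auto
      ultimately have hz: "inner b z = (1 + e) * c - e * inner b y" "inner b z \<le> c" by simp_all
      moreover have "(1 + e) * c = c + e * c" by (simp add: algebra_simps)
      ultimately have "e * c \<le> e * inner b y" by linarith
      then have "c \<le> inner b y" using e by simp
      then have "inner b y = c" using \<open>inner b y \<le> c\<close> by simp
      then show "y \<in> F" using y bc by auto
    qed
  qed
  have Rne: "R \<noteq> {}"
  proof
    assume "R = {}"
    then have "F = Pspread" using Fchar by auto
    then show False using pf by auto
  qed
  define S where "S = fst ` R"
  define T where "T = snd ` R"
  have "F = fc S T"
  proof
    show "F \<subseteq> fc S T"
    proof
      fix y assume yF: "y \<in> F"
      have yP: "\<forall>i j. y$i - y$j \<le> 2" using FP yF by auto
      have "\<forall>i\<in>S. \<forall>j\<in>T. y$i - y$j = 2"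
      proof (intro ballI)
        fix i j assume "i \<in> S" "j \<in> T"
        then obtain j' i' where "(i,j') \<in> R" "(i',j) \<in> R" unfolding S_def T_def by force
        then have "y$i - y$j' = 2" "y$i' - y$j = 2" using yF R_def by auto
        moreover have "y$i' - y$j' \<le> 2" "y$i - y$j \<le> 2" using yP by auto
        ultimately show "y$i - y$j = 2" by linarith
      qed
      then show "y \<in> fc S T" unfolding fc_def using yP by auto
    qed
  next
    show "fc S T \<subseteq> F"
    proof
      fix y assume y: "y \<in> fc S T"
      then have "y \<in> Pspread" using fc_sub by auto
      moreover have "\<forall>(i,j)\<in>R. y$i - y$j = 2"
        using y unfolding fc_def S_def T_def by force
      ultimately show "y \<in> F" using Fchar by auto
    qed
  qed
  moreover have "(S,T) \<in> VP"
  proof -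
    have "S \<noteq> {}" "T \<noteq> {}" using Rne S_def T_def by auto
    moreover have "S \<inter> T = {}"
    proof (rule ccontr)
      assume "S \<inter> T \<noteq> {}"
      then obtain i where "i \<in> S" "i \<in> T" by auto
      have "x0 \<in> fc S T" using x0(1) \<open>F = fc S T\<close> by simp
      then have "x0$i - x0$i = 2" using \<open>i \<in> S\<close> \<open>i \<in> T\<close> unfolding fc_def by blast
      then show False by simp
    qed
    ultimately show ?thesis by simp
  qed
  ultimately show ?thesis by blast
qed

lemma axis_comp: "(axis l (1::real) :: real^'n) $ i = (if i = l then 1 else 0)"
  unfolding axis_def by simp

lemma aff_dim_fc:
  fixes S T :: "'n::finite set"
  assumes v: "(S,T) \<in> VP"
  shows "aff_dim (fc S T) = int CARD('n) + 1 - int (card S + card T)"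
proof -
  have v': "S \<noteq> {}" "T \<noteq> {}" "S \<inter> T = {}" using v by auto
  define p where "p = gp S T"
  define U where "U = S \<union> T"
  define w :: "real^'n" where "w = (\<chi> i. if i \<in> U then 1 else 0)"
  define A where "A = (\<lambda>l. axis l (1::real) :: real^'n) ` (- U)"
  define B where "B = insert w A"
  define G where "G = (\<lambda>x. x - p) ` fc S T"
  have pin: "p \<in> fc S T" unfolding p_def using gp_in v' by auto
  have ad: "aff_dim (fc S T) = int (dim G)"
    unfolding G_def by (rule aff_dim_eq_dim_subtract) (rule hull_inc[OF pin])
  obtain u0 where u0: "u0 \<in> S" using v' by auto
  have wA: "w \<notin> A"
  proof
    assume "w \<in> A"
    then obtain l where "l \<notin> U" "w = axis l 1" unfolding A_def by auto
    moreover have "u0 \<noteq> l" using u0 U_def \<open>l \<notin> U\<close> by blast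
    ultimately have "w $ u0 = 0" by (simp add: axis_comp)
    moreover have "w $ u0 = 1" unfolding w_def U_def using u0 by simp
    ultimately show False by simp
  qed
  have w0: "w \<noteq> 0"
  proof
    assume "w = 0"
    then have "w $ u0 = 0" by simp
    moreover have "w $ u0 = 1" unfolding w_def U_def using u0 by simp
    ultimately show False by simp
  qed
  have injA: "inj_on (\<lambda>l. axis l (1::real) :: real^'n) (- U)"
    unfolding inj_on_def by (simp add: axis_eq_axis)
  have cardA: "card A = CARD('n) - (card S + card T)"
    unfolding A_def using card_image[OF injA] card_compl_pair[OF v'(3)] U_def by simp
  have cardB: "card B = CARD('n) - (card S + card T) + 1"
    unfolding B_def using wA cardA by (simp add: A_def)
  have indep: "independent B"
  proof (rule pairwise_orthogonal_independent)
    show "pairwise orthogonal B"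
      unfolding pairwise_def B_def A_def orthogonal_def
    proof (intro ballI impI)
      fix x y assume x: "x \<in> insert w ((\<lambda>l. axis l 1) ` (- U))" and y: "y \<in> insert w ((\<lambda>l. axis l 1) ` (- U))"
        and xy: "x \<noteq> y"
      show "x \<bullet> y = 0"
      proof -
        have ax: "axis l 1 \<bullet> w = 0" "w \<bullet> axis l 1 = 0" if "l \<notin> U" for l
          using that by (simp_all add: inner_axis' w_def inner_commute)
        show ?thesis using x y xy ax by (auto simp: inner_axis_axis)
      qed
    qed
    show "0 \<notin> B" unfolding B_def A_def using w0 by (auto simp: axis_eq_0_iff)
  qed
  have finB: "finite B" unfolding B_def A_def by simp
  have memF1: "p + (1/2) *\<^sub>R axis l 1 \<in> fc S T" if "l \<notin> U" for l
    using that v'(3) unfolding fc_def p_def gp_def U_def axis_def by auto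
  have memF2: "p + (1/2) *\<^sub>R w \<in> fc S T"
    using v'(3) unfolding fc_def p_def gp_def U_def w_def by auto
  have "B \<subseteq> span G"
  proof
    fix v assume "v \<in> B"
    then have "p + (1/2) *\<^sub>R v \<in> fc S T" unfolding B_def A_def using memF1 memF2 by auto
    then have "(1/2) *\<^sub>R v \<in> G" unfolding G_def by (rule rev_image_eqI) simp
    then have "2 *\<^sub>R ((1/2) *\<^sub>R v) \<in> span G" by (intro span_mul span_base)
    then show "v \<in> span G" by simp
  qed
  then have le1: "card B \<le> dim G" using independent_card_le_dim[of B "span G"] indep by (simp add: dim_span)
  have "G \<subseteq> span B"
  proof
    fix g assume "g \<in> G"
    then obtain x where x: "x \<in> fc S T" "g = x - p" unfolding G_def by auto
    have xs: "x$i = x$u0" if "i \<in> S" for i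
    proof -
      obtain j where "j \<in> T" using v' by auto
      then have "x$i - x$j = 2" "x$u0 - x$j = 2" using x(1) that u0 unfolding fc_def by blast+
      then show ?thesis by simp
    qed
    have xt: "x$i = x$u0 - 2" if "i \<in> T" for i
    proof -
      have "x$u0 - x$i = 2" using x(1) that u0 unfolding fc_def by blast
      then show ?thesis by simp
    qed
    have eq: "g = (\<Sum>l\<in>-U. (x$l - 1) *\<^sub>R axis l 1) + (x$u0 - 2) *\<^sub>R w"
    proof (subst vec_eq_iff, intro allI)
      fix i
      have sc: "(\<Sum>l\<in>-U. (x$l - 1) *\<^sub>R (axis l 1 :: real^'n)) $ i = (if i \<in> U then 0 else x$i - 1)"
        by (simp add: sum_component axis_comp if_distrib[of "\<lambda>t. _ * t"] sum.delta cong: if_cong)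
      have "((\<Sum>l\<in>-U. (x$l - 1) *\<^sub>R axis l 1) + (x$u0 - 2) *\<^sub>R w) $ i
          = (if i \<in> U then 0 else x$i - 1) + (x$u0 - 2) * w$i"
        using sc by simp
      moreover have "g $ i = (if i \<in> U then 0 else x$i - 1) + (x$u0 - 2) * w$i"
        using xs[of i] xt[of i] v'(3) unfolding x(2) p_def gp_def w_def U_def by auto
      ultimately show "g $ i = ((\<Sum>l\<in>-U. (x$l - 1) *\<^sub>R axis l 1) + (x$u0 - 2) *\<^sub>R w) $ i"
        by simp
    qed
    show "g \<in> span B" unfolding eq B_def A_def
      by (intro span_add span_sum span_mul span_base) auto
  qed
  then have le2: "dim G \<le> card B" using subset_le_dim[of G B] dim_eq_card_independent[OF indep] by simp
  have "dim G = card B" using le1 le2 by simp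
  moreover have "card S + card T \<le> CARD('n)" using rk_le[OF v] by simp
  ultimately show ?thesis using ad cardB by simp
qed



definition swp :: "'a \<times> 'a \<Rightarrow> 'a \<times> 'a" where "swp x = (snd x, fst x)"

definition DFs :: "'n::finite set \<times> 'n set \<Rightarrow> (real^'n) set" where
  "DFs x = fc (fst x) (snd x) \<union> fc (snd x) (fst x)"

lemma DFs_alt: "DFs x = fc (fst x) (snd x) \<union> uminus ` fc (fst x) (snd x)"
  unfolding DFs_def by (simp add: neg_fc)

lemma proper_face_iff:
  "proper_face (Pspread :: (real^'n::finite) set) F \<longleftrightarrow> (\<exists>x\<in>VP. F = fc (fst x) (snd x))"
proof
  assume "proper_face (Pspread :: (real^'n::finite) set) F"
  then obtain S T where "(S,T) \<in> VP" "F = fc S T" using proper_face_fc by blast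
  then show "\<exists>x\<in>VP. F = fc (fst x) (snd x)" by (intro bexI[of _ "(S,T)"]) simp_all
next
  assume "\<exists>x\<in>VP. F = fc (fst x) (snd x)"
  then obtain x where x: "x \<in> VP" "F = fc (fst x) (snd x)" by blast
  then have "(fst x, snd x) \<in> VP" by simp
  then show "proper_face (Pspread :: (real^'n::finite) set) F" using fc_proper x(2) by blast
qed

lemma double_face_iff:
  "double_face (Pspread :: (real^'n::finite) set) D \<longleftrightarrow> D \<in> DFs ` VP"
proof
  assume "double_face (Pspread :: (real^'n::finite) set) D"
  then obtain F where F: "proper_face (Pspread :: (real^'n::finite) set) F" "D = F \<union> uminus ` F"
    unfolding double_face_def by blast
  then obtain x where "x \<in> VP" "F = fc (fst x) (snd x)" unfolding proper_face_iff by blast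
  then show "D \<in> DFs ` VP" using F(2) unfolding DFs_alt by blast
next
  assume "D \<in> DFs ` VP"
  then obtain x where x: "x \<in> VP" "D = DFs x" by blast
  then have "proper_face (Pspread :: (real^'n::finite) set) (fc (fst x) (snd x))"
    unfolding proper_face_iff by blast
  then show "double_face (Pspread :: (real^'n::finite) set) D"
    unfolding double_face_def using x(2) DFs_alt by blast
qed

lemma DFs_sub_iff:
  assumes x: "x \<in> VP" and y: "y \<in> VP"
  shows "DFs x \<subseteq> DFs y \<longleftrightarrow> lep y x \<or> lep (swp y) x"
proof -
  obtain S T S' T' where xy: "x = (S,T)" "y = (S',T')" by (cases x, cases y)
  have v: "S \<noteq> {}" "T \<noteq> {}" "S \<inter> T = {}" "S' \<noteq> {}" "T' \<noteq> {}" "S' \<inter> T' = {}"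
    using x y xy by auto
  show ?thesis
  proof
    assume h: "DFs x \<subseteq> DFs y"
    have "gp S T \<in> DFs x" unfolding xy DFs_def using gp_in[OF v(3)] by simp
    then have "gp S T \<in> DFs y" using h by blast
    then have "gp S T \<in> fc S' T' \<or> gp S T \<in> fc T' S'" unfolding xy DFs_def by simp
    then show "lep y x \<or> lep (swp y) x"
      unfolding xy swp_def using gp_in_iff[OF v(3)] v by auto
  next
    assume "lep y x \<or> lep (swp y) x"
    then have "(S' \<subseteq> S \<and> T' \<subseteq> T) \<or> (T' \<subseteq> S \<and> S' \<subseteq> T)" unfolding xy swp_def by auto
    then show "DFs x \<subseteq> DFs y"
    proof
      assume "S' \<subseteq> S \<and> T' \<subseteq> T"
      then have "fc S T \<subseteq> fc S' T'" "fc T S \<subseteq> fc T' S'" using fc_mono by blast+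
      then show ?thesis unfolding xy DFs_def by auto
    next
      assume "T' \<subseteq> S \<and> S' \<subseteq> T"
      then have "fc S T \<subseteq> fc T' S'" "fc T S \<subseteq> fc S' T'" using fc_mono by blast+
      then show ?thesis unfolding xy DFs_def by auto
    qed
  qed
qed

lemma DFs_eq_iff:
  assumes x: "x \<in> VP" and y: "y \<in> VP"
  shows "DFs x = DFs y \<longleftrightarrow> y = x \<or> y = swp x"
proof -
  obtain S T S' T' where xy: "x = (S,T)" "y = (S',T')" by (cases x, cases y)
  have v: "S \<noteq> {}" "T \<noteq> {}" "S \<inter> T = {}" "S' \<noteq> {}" "T' \<noteq> {}" "S' \<inter> T' = {}"
    using x y xy by auto
  show ?thesis
  proof
    assume "DFs x = DFs y"
    then have "lep y x \<or> lep (swp y) x" "lep x y \<or> lep (swp x) y"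
      using DFs_sub_iff[OF x y] DFs_sub_iff[OF y x] by auto
    then have h: "(S' \<subseteq> S \<and> T' \<subseteq> T \<or> T' \<subseteq> S \<and> S' \<subseteq> T) \<and> (S \<subseteq> S' \<and> T \<subseteq> T' \<or> T \<subseteq> S' \<and> S \<subseteq> T')"
      unfolding xy swp_def by auto
    show "y = x \<or> y = swp x"
    proof -
      { assume a: "S' \<subseteq> S" "T' \<subseteq> T" "T \<subseteq> S'" "S \<subseteq> T'"
        then have "T \<subseteq> S" by blast
        then have False using v by blast }
      moreover
      { assume a: "T' \<subseteq> S" "S' \<subseteq> T" "S \<subseteq> S'" "T \<subseteq> T'"
        then have "S \<subseteq> T" by blast
        then have False using v by blast }
      ultimately show ?thesis using h unfolding xy swp_def by auto
    qed
  next
    assume "y = x \<or> y = swp x"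
    then show "DFs x = DFs y" unfolding DFs_def swp_def by auto
  qed
qed

lemma DFs_props:
  assumes "x \<in> VP"
  shows "DFs x \<noteq> Pspread" "DFs x \<noteq> {}" "DFs x \<subseteq> Pspread"
proof -
  obtain S T where xy: "x = (S,T)" by (cases x)
  have v: "S \<noteq> {}" "T \<noteq> {}" "S \<inter> T = {}" using assms xy by auto
  show "DFs x \<noteq> Pspread" using zero_in zero_notin[OF v(1,2)] zero_notin[OF v(2,1)] xy
    unfolding DFs_def by auto
  show "DFs x \<noteq> {}" using gp_in[OF v(3)] xy unfolding DFs_def by auto
  show "DFs x \<subseteq> Pspread" using fc_sub xy unfolding DFs_def by auto
qed

lemma rk_swp: "rk (swp x) = rk x"
  unfolding swp_def rk_def by simp

lemma swp_VP: "x \<in> VP \<Longrightarrow> swp x \<in> VP"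
  unfolding swp_def VP_def by auto

lemma df_rank_DFs:
  assumes "x \<in> VP"
  shows "df_rank (Pspread :: (real^'n::finite) set) (DFs x) = int CARD('n) + 1 - int (rk x)"
proof -
  have ex: "\<exists>F. proper_face (Pspread :: (real^'n) set) F \<and> DFs x = F \<union> uminus ` F"
    using assms unfolding proper_face_iff DFs_alt by blast
  define F where "F = (SOME F. proper_face (Pspread :: (real^'n) set) F \<and> DFs x = F \<union> uminus ` F)"
  have F: "proper_face (Pspread :: (real^'n) set) F" "DFs x = F \<union> uminus ` F"
    using someI_ex[OF ex] unfolding F_def by auto
  then obtain y where y: "y \<in> VP" "F = fc (fst y) (snd y)" unfolding proper_face_iff by auto
  have "DFs y = DFs x" using F y DFs_alt by simp
  then have "x = y \<or> x = swp y" using DFs_eq_iff[OF y(1) assms] by simp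
  then have "rk y = rk x" using rk_swp by metis
  moreover have "aff_dim F = int CARD('n) + 1 - int (rk y)"
    using aff_dim_fc[of "fst y" "snd y"] y by (cases y) simp
  ultimately show ?thesis unfolding df_rank_def F_def using DFs_props[OF assms] by simp
qed

lemma lattice_eq: "df_lattice (Pspread :: (real^'n::finite) set) = DFs ` VP \<union> {Pspread, {}}"
  unfolding df_lattice_def using double_face_iff by blast

lemma lattice_sub: "X \<in> df_lattice (Pspread :: (real^'n::finite) set) \<Longrightarrow> X \<subseteq> Pspread"
proof -
  assume "X \<in> df_lattice (Pspread :: (real^'n::finite) set)"
  then consider "X = Pspread" | "X = {}" | x where "x \<in> VP" "X = DFs x" unfolding lattice_eq by blast
  then show ?thesis
  proof cases
    case 3 then show ?thesis using DFs_props(3)[OF 3(1)] by simp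
  qed auto
qed

lemma P_ne: "(Pspread :: (real^'n::finite) set) \<noteq> {}"
  using zero_in by auto

lemma rank_P: "df_rank (Pspread :: (real^'n::finite) set) Pspread = int CARD('n)"
  unfolding df_rank_def by simp

lemma exists_rk:
  assumes "2 \<le> k" "k \<le> CARD('n::finite)"
  shows "\<exists>x\<in>(VP :: ('n set \<times> 'n set) set). rk x = k"
proof -
  obtain u :: 'n where True by blast
  have "card (- {u}) = CARD('n) - 1" by (simp add: Compl_eq_Diff_UNIV card_Diff_singleton)
  then have "k - 1 \<le> card (- {u})" using assms by simp
  then obtain W where W: "W \<subseteq> - {u}" "card W = k - 1" "finite W" by (rule obtain_subset_with_card_n)
  have "W \<noteq> {}" using W assms by auto
  then have "({u}, W) \<in> VP" using W by auto
  moreover have "rk ({u}, W) = k" using W assms by simp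
  ultimately show ?thesis by blast
qed

lemma rank_empty:
  assumes "2 \<le> CARD('n::finite)"
  shows "df_rank (Pspread :: (real^'n) set) {} = 0"
proof -
  have set_eq: "{aff_dim F | F. proper_face (Pspread :: (real^'n) set) F} = (\<lambda>x. int CARD('n) + 1 - int (rk x)) ` (VP :: ('n set \<times> 'n set) set)"
  proof
    show "{aff_dim F | F. proper_face (Pspread :: (real^'n) set) F} \<subseteq> (\<lambda>x. int CARD('n) + 1 - int (rk x)) ` (VP :: ('n set \<times> 'n set) set)"
    proof
      fix a assume "a \<in> {aff_dim F | F. proper_face (Pspread :: (real^'n) set) F}"
      then obtain F where "a = aff_dim F" "proper_face (Pspread :: (real^'n) set) F" by blast
      then obtain x where x: "x \<in> VP" "F = fc (fst x) (snd x)" "a = aff_dim F" unfolding proper_face_iff by blast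
      then have "a = int CARD('n) + 1 - int (rk x)"
        using aff_dim_fc[of "fst x" "snd x"] by (cases x) auto
      then show "a \<in> (\<lambda>x. int CARD('n) + 1 - int (rk x)) ` (VP :: ('n set \<times> 'n set) set)" using x(1) by blast
    qed
  next
    show "(\<lambda>x. int CARD('n) + 1 - int (rk x)) ` (VP :: ('n set \<times> 'n set) set) \<subseteq> {aff_dim F | F. proper_face (Pspread :: (real^'n) set) F}"
    proof
      fix a assume "a \<in> (\<lambda>x. int CARD('n) + 1 - int (rk x)) ` (VP :: ('n set \<times> 'n set) set)"
      then obtain x :: "'n set \<times> 'n set" where x: "x \<in> VP" "a = int CARD('n) + 1 - int (rk x)" by blast
      then have "proper_face (Pspread :: (real^'n) set) (fc (fst x) (snd x))" unfolding proper_face_iff by blast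
      moreover have "aff_dim (fc (fst x) (snd x) :: (real^'n) set) = a"
        using aff_dim_fc[of "fst x" "snd x"] x by (cases x) auto
      ultimately show "a \<in> {aff_dim F | F. proper_face (Pspread :: (real^'n) set) F}" by blast
    qed
  qed
  have "Min ((\<lambda>x. int CARD('n) + 1 - int (rk x)) ` (VP :: ('n set \<times> 'n set) set)) = 1"
  proof (rule Min_eqI)
    show "finite ((\<lambda>x. int CARD('n) + 1 - int (rk x)) ` (VP :: ('n set \<times> 'n set) set))" by simp
  next
    fix y assume "y \<in> (\<lambda>x. int CARD('n) + 1 - int (rk x)) ` (VP :: ('n set \<times> 'n set) set)"
    then obtain x :: "'n set \<times> 'n set" where "x \<in> VP" "y = int CARD('n) + 1 - int (rk x)" by blast
    then show "1 \<le> y" using rk_le[of x] by simp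
  next
    have "\<exists>x\<in>(VP :: ('n set \<times> 'n set) set). rk x = CARD('n)" by (rule exists_rk) (use assms in auto)
    then obtain x :: "'n set \<times> 'n set" where "x \<in> VP" "rk x = CARD('n)" by blast
    then show "1 \<in> (\<lambda>x. int CARD('n) + 1 - int (rk x)) ` (VP :: ('n set \<times> 'n set) set)"
      by (intro image_eqI[of _ _ x]) simp_all
  qed
  moreover have "({}::(real^'n) set) \<noteq> Pspread" using P_ne by metis
  ultimately show ?thesis unfolding df_rank_def set_eq by simp
qed

lemma rank_strict:
  assumes N2: "2 \<le> CARD('n::finite)"
    and X: "X \<in> df_lattice (Pspread :: (real^'n) set)" and Y: "Y \<in> df_lattice (Pspread :: (real^'n) set)"
    and XY: "X \<subseteq> Y" "X \<noteq> Y"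
  shows "df_rank (Pspread :: (real^'n) set) X < df_rank (Pspread :: (real^'n) set) Y"
proof -
  have YP: "Y \<subseteq> Pspread" using lattice_sub[OF Y] .
  have rP: "df_rank (Pspread :: (real^'n) set) Pspread = int CARD('n)" by (rule rank_P)
  consider "X = Pspread" | "X = {}" | x where "x \<in> VP" "X = DFs x" using X lattice_eq by blast
  then show ?thesis
  proof cases
    case 1 then show ?thesis using YP XY by auto
  next
    case 2
    then have "Y \<noteq> {}" using XY by auto
    then consider "Y = Pspread" | y where "y \<in> VP" "Y = DFs y" using Y lattice_eq by blast
    then show ?thesis
    proof cases
      case 1 then show ?thesis using rP rank_empty[OF N2] 2 N2 by simp
    next
      case y: 2
      then show ?thesis using rank_empty[OF N2] 2 df_rank_DFs[OF y(1)] rk_le[OF y(1)] by simp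
    qed
  next
    case x: 3
    then have "Y \<noteq> {}" using XY DFs_props by auto
    then consider "Y = Pspread" | y where "y \<in> VP" "Y = DFs y" using Y lattice_eq by blast
    then show ?thesis
    proof cases
      case 1 then show ?thesis using rP df_rank_DFs[OF x(1)] rk_ge[OF x(1)] x by simp
    next
      case y: 2
      have "lep y x \<or> lep (swp y) x" using DFs_sub_iff[OF x(1) y(1)] XY x y by simp
      then obtain z where z: "z \<in> VP" "lep z x" "rk z = rk y" "DFs z = DFs y"
        using y(1) swp_VP rk_swp DFs_eq_iff[OF y(1)] by metis
      have "z \<noteq> x" using z XY x y by auto
      then have "rk z < rk x" using strict_VP[OF z(1) x(1) z(2)] by simp
      then show ?thesis using df_rank_DFs[OF x(1)] df_rank_DFs[OF y(1)] x y z by simp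
    qed
  qed
qed

lemma card_fibers:
  assumes "A \<subseteq> DFs ` VP"
  shows "card {x \<in> (VP :: ('n::finite set \<times> 'n set) set). DFs x \<in> A} = 2 * card A"
proof -
  have finA: "finite A" using assms finite_surj by (metis finite_VP)
  have eq: "{x \<in> (VP :: ('n set \<times> 'n set) set). DFs x \<in> A} = (\<Union>D\<in>A. {x \<in> VP. DFs x = D})" by auto
  have "card (\<Union>D\<in>A. {x \<in> (VP :: ('n set \<times> 'n set) set). DFs x = D}) = (\<Sum>D\<in>A. card {x \<in> (VP :: ('n set \<times> 'n set) set). DFs x = D})"
    by (rule card_UN_disjoint) (use finA in auto)
  also have "\<dots> = (\<Sum>D\<in>A. 2)"
  proof (rule sum.cong)
    fix D assume "D \<in> A"
    then obtain x0 where x0: "x0 \<in> VP" "D = DFs x0" using assms by blast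
    have "{x \<in> VP. DFs x = D} = {x0, swp x0}"
    proof
      show "{x \<in> VP. DFs x = D} \<subseteq> {x0, swp x0}"
      proof
        fix x assume "x \<in> {x \<in> VP. DFs x = D}"
        then have "x \<in> VP" "DFs x0 = DFs x" using x0 by auto
        then show "x \<in> {x0, swp x0}" using DFs_eq_iff[OF x0(1)] by blast
      qed
    next
      have "swp x0 \<in> VP" using swp_VP[OF x0(1)] .
      moreover have "DFs x0 = DFs (swp x0)" using DFs_eq_iff[OF x0(1) \<open>swp x0 \<in> VP\<close>] by simp
      ultimately show "{x0, swp x0} \<subseteq> {x \<in> VP. DFs x = D}" using x0 by auto
    qed
    moreover have "x0 \<noteq> swp x0" using x0(1) unfolding swp_def by (cases x0) auto
    ultimately show "card {x \<in> VP. DFs x = D} = 2" by simp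
  qed simp
  finally show ?thesis using eq by simp
qed

lemma level_eq:
  fixes x :: "'n::finite set \<times> 'n set"
  assumes "x \<in> VP"
  shows "int CARD('n) + 1 - int (rk x) = int (CARD('n) div 3) + 1 \<longleftrightarrow> rk x = CARD('n) - CARD('n) div 3"
  using rk_le[OF assms] by auto

lemma antichain_bound:
  assumes N2: "2 \<le> CARD('n::finite)"
    and A: "df_antichain (Pspread :: (real^'n) set) A"
  shows "card A \<le> card (DFs ` {x \<in> (VP :: ('n set \<times> 'n set) set). rk x = CARD('n) - CARD('n) div 3})"
proof -
  define m where "m = CARD('n) - CARD('n) div 3"
  define Vm where "Vm = {x \<in> (VP :: ('n set \<times> 'n set) set). rk x = m}"
  define L where "L = DFs ` Vm"
  have AL: "A \<subseteq> df_lattice (Pspread :: (real^'n) set)" and ac: "\<forall>X\<in>A. \<forall>Y\<in>A. X \<noteq> Y \<longrightarrow> \<not> X \<subseteq> Y"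
    using A unfolding df_antichain_def by auto
  have m2: "2 \<le> m" "m \<le> CARD('n)" using N2 unfolding m_def by linarith+
  have "Vm \<noteq> {}" using exists_rk[OF m2] unfolding Vm_def by blast
  then have L1: "1 \<le> card L" unfolding L_def by (simp add: Suc_le_eq card_gt_0_iff)
  have LV: "L \<subseteq> DFs ` VP" unfolding L_def Vm_def by auto
  have preL: "{x \<in> (VP :: ('n set \<times> 'n set) set). DFs x \<in> L} = Vm"
  proof
    show "{x \<in> VP. DFs x \<in> L} \<subseteq> Vm"
    proof
      fix x assume "x \<in> {x \<in> (VP :: ('n set \<times> 'n set) set). DFs x \<in> L}"
      then obtain y where "x \<in> VP" "y \<in> Vm" "DFs x = DFs y" unfolding L_def by auto
      then have "y \<in> VP" "rk y = m" "x = y \<or> x = swp y" using DFs_eq_iff[of y x] unfolding Vm_def by auto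
      then have "rk x = m" using rk_swp by metis
      then show "x \<in> Vm" using \<open>x \<in> VP\<close> unfolding Vm_def by simp
    qed
  next
    show "Vm \<subseteq> {x \<in> VP. DFs x \<in> L}" unfolding L_def Vm_def by auto
  qed
  have cVm: "card Vm = 2 * card L" using card_fibers[OF LV] preL by simp
  show ?thesis
  proof (cases "Pspread \<in> A \<or> {} \<in> A")
    case True
    then have "A \<subseteq> {Pspread} \<or> A \<subseteq> {{}}"
    proof
      assume PA: "Pspread \<in> A"
      have "A \<subseteq> {Pspread}"
      proof
        fix Y assume "Y \<in> A"
        then have "Y \<subseteq> Pspread" using AL lattice_sub by blast
        then show "Y \<in> {Pspread}" using ac PA \<open>Y \<in> A\<close> by blast
      qed
      then show ?thesis by blast
    next
      assume EA: "{} \<in> A"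
      have "A \<subseteq> {{}}"
      proof
        fix Y assume "Y \<in> A"
        then show "Y \<in> {{}}" using ac EA by blast
      qed
      then show ?thesis by blast
    qed
    then have "card A \<le> 1"
    proof
      assume "A \<subseteq> {Pspread}" then show ?thesis using card_mono[of "{Pspread}" A] by simp
    next
      assume "A \<subseteq> {{}}" then show ?thesis using card_mono[of "{{}}" A] by simp
    qed
    then show ?thesis using L1 unfolding L_def Vm_def m_def by linarith
  next
    case False
    then have ADF: "A \<subseteq> DFs ` VP" using AL lattice_eq by blast
    define B where "B = {x \<in> (VP :: ('n set \<times> 'n set) set). DFs x \<in> A}"
    have cB: "card B = 2 * card A" unfolding B_def by (rule card_fibers[OF ADF])
    have acB: "achain lep B" unfolding achain_def
    proof (intro ballI impI notI)
      fix x y assume x: "x \<in> B" and y: "y \<in> B" and xy: "x \<noteq> y" and l: "lep x y"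
      have xV: "x \<in> VP" and yV: "y \<in> VP" and xA: "DFs x \<in> A" and yA: "DFs y \<in> A" using x y B_def by auto
      have sub: "DFs y \<subseteq> DFs x" using DFs_sub_iff[OF yV xV] l by simp
      show False
      proof (cases "DFs x = DFs y")
        case True
        then have "y = swp x" using DFs_eq_iff[OF xV yV] xy by simp
        then have "fst x \<subseteq> snd x" using l unfolding lep_def swp_def by simp
        moreover have "fst x \<noteq> {}" "fst x \<inter> snd x = {}" using xV unfolding VP_def by auto
        ultimately show False by blast
      next
        case False
        then have "DFs y \<noteq> DFs x" by metis
        then have "\<not> DFs y \<subseteq> DFs x" using ac xA yA by blast
        then show False using sub by contradiction
      qed
    qed
    have "card B \<le> card {x \<in> (VP :: ('n set \<times> 'n set) set). rk x = card (UNIV::'n set) - card (UNIV::'n set) div 3}"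
      by (rule sperner_VP[OF N2]) (use acB B_def in auto)
    then have "2 * card A \<le> 2 * card L" using cB cVm unfolding Vm_def m_def by simp
    then show ?thesis unfolding L_def Vm_def m_def by simp
  qed
qed

theorem theorem3:
  assumes "CARD('n) \<ge> 2"
  shows "finite (df_lattice (Pspread :: (real ^ 'n) set))
    \<and> Max (card ` {A. df_antichain (Pspread :: (real ^ 'n) set) A})
        = Max ((\<lambda>k. card (rank_level (Pspread :: (real ^ 'n) set) k))
                 ` df_rank (Pspread :: (real ^ 'n) set) ` df_lattice (Pspread :: (real ^ 'n) set))
    \<and> df_antichain (Pspread :: (real ^ 'n) set)
        (double_faces_of_dim (Pspread :: (real ^ 'n) set) (int (CARD('n) div 3) + 1))
    \<and> card (double_faces_of_dim (Pspread :: (real ^ 'n) set) (int (CARD('n) div 3) + 1))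
        = Max (card ` {A. df_antichain (Pspread :: (real ^ 'n) set) A})"
proof -
  have N2: "2 \<le> CARD('n)" using assms .
  define m where "m = CARD('n) - CARD('n) div 3"
  define Vm where "Vm = {x \<in> (VP :: ('n set \<times> 'n set) set). rk x = m}"
  define L where "L = DFs ` Vm"
  define d where "d = int (CARD('n) div 3) + 1"
  have m2: "2 \<le> m" "m \<le> CARD('n)" using N2 unfolding m_def by linarith+
  obtain x0 where x0: "x0 \<in> Vm" using exists_rk[OF m2] unfolding Vm_def by blast
  have finlat: "finite (df_lattice (Pspread :: (real ^ 'n) set))" unfolding lattice_eq by simp
  have dfd: "double_faces_of_dim (Pspread :: (real ^ 'n) set) d = L"
  proof
    show "double_faces_of_dim (Pspread :: (real ^ 'n) set) d \<subseteq> L"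
    proof
      fix D assume "D \<in> double_faces_of_dim (Pspread :: (real ^ 'n) set) d"
      then obtain F where F: "proper_face (Pspread :: (real ^ 'n) set) F" "aff_dim F = d" "D = F \<union> uminus ` F"
        unfolding double_faces_of_dim_def by blast
      then obtain x where x: "x \<in> VP" "F = fc (fst x) (snd x)" unfolding proper_face_iff by blast
      have "aff_dim F = int CARD('n) + 1 - int (rk x)" using aff_dim_fc[of "fst x" "snd x"] x by (cases x) auto
      then have "rk x = m" using F(2) level_eq[OF x(1)] unfolding d_def m_def by simp
      moreover have "D = DFs x" unfolding DFs_alt using F(3) x(2) by simp
      ultimately show "D \<in> L" using x(1) unfolding L_def Vm_def by blast
    qed
  next
    show "L \<subseteq> double_faces_of_dim (Pspread :: (real ^ 'n) set) d"
    proof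
      fix D assume "D \<in> L"
      then obtain x where x: "x \<in> VP" "rk x = m" "D = DFs x" unfolding L_def Vm_def by blast
      have pf: "proper_face (Pspread :: (real ^ 'n) set) (fc (fst x) (snd x))" using x(1) unfolding proper_face_iff by blast
      have "aff_dim (fc (fst x) (snd x) :: (real^'n) set) = int CARD('n) + 1 - int (rk x)"
        using aff_dim_fc[of "fst x" "snd x"] x by (cases x) auto
      then have "aff_dim (fc (fst x) (snd x) :: (real^'n) set) = d" using level_eq[OF x(1)] x(2) unfolding d_def m_def by simp
      then show "D \<in> double_faces_of_dim (Pspread :: (real ^ 'n) set) d"
        unfolding double_faces_of_dim_def using pf x(3) DFs_alt by blast
    qed
  qed
  have rP: "df_rank (Pspread :: (real^'n) set) Pspread = int CARD('n)" by (rule rank_P)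
  have dN: "d \<noteq> int CARD('n)" "d \<noteq> 0" using N2 unfolding d_def by linarith+
  have rl: "rank_level (Pspread :: (real ^ 'n) set) d = L"
  proof
    show "rank_level (Pspread :: (real ^ 'n) set) d \<subseteq> L"
    proof
      fix D assume D: "D \<in> rank_level (Pspread :: (real ^ 'n) set) d"
      then have Dl: "D \<in> df_lattice (Pspread :: (real ^ 'n) set)" "df_rank (Pspread :: (real ^ 'n) set) D = d"
        unfolding rank_level_def by auto
      then consider "D = Pspread" | "D = {}" | x where "x \<in> VP" "D = DFs x" unfolding lattice_eq by blast
      then show "D \<in> L"
      proof cases
        case 1 then show ?thesis using Dl rP dN by simp
      next
        case 2 then show ?thesis using Dl rank_empty[OF N2] dN by simp
      next
        case 3
        then have "rk x = m" using Dl df_rank_DFs[OF 3(1)] level_eq[OF 3(1)] unfolding d_def m_def by simp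
        then show ?thesis using 3 unfolding L_def Vm_def by blast
      qed
    qed
  next
    show "L \<subseteq> rank_level (Pspread :: (real ^ 'n) set) d"
    proof
      fix D assume "D \<in> L"
      then obtain x where x: "x \<in> VP" "rk x = m" "D = DFs x" unfolding L_def Vm_def by blast
      then have "D \<in> df_lattice (Pspread :: (real ^ 'n) set)" unfolding lattice_eq by blast
      moreover have "df_rank (Pspread :: (real ^ 'n) set) D = d"
        using df_rank_DFs[OF x(1)] level_eq[OF x(1)] x unfolding d_def m_def by simp
      ultimately show "D \<in> rank_level (Pspread :: (real ^ 'n) set) d" unfolding rank_level_def by blast
    qed
  qed
  have acl: "df_antichain (Pspread :: (real ^ 'n) set) (rank_level (Pspread :: (real ^ 'n) set) k)" for k
    unfolding df_antichain_def
  proof (intro conjI ballI impI notI)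
    show "rank_level (Pspread :: (real ^ 'n) set) k \<subseteq> df_lattice Pspread" unfolding rank_level_def by blast
  next
    fix X Y assume X: "X \<in> rank_level (Pspread :: (real ^ 'n) set) k" and Y: "Y \<in> rank_level (Pspread :: (real ^ 'n) set) k"
      and XY: "X \<noteq> Y" "X \<subseteq> Y"
    have "df_rank (Pspread :: (real ^ 'n) set) X < df_rank (Pspread :: (real ^ 'n) set) Y"
      using rank_strict[OF N2 _ _ XY(2) XY(1)] X Y unfolding rank_level_def by blast
    then show False using X Y unfolding rank_level_def by simp
  qed
  have bound: "card A \<le> card L" if "df_antichain (Pspread :: (real ^ 'n) set) A" for A
    using antichain_bound[OF N2 that] unfolding L_def Vm_def m_def .
  have finAC: "finite {A. df_antichain (Pspread :: (real ^ 'n) set) A}"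
  proof (rule finite_subset)
    show "{A. df_antichain (Pspread :: (real ^ 'n) set) A} \<subseteq> Pow (df_lattice Pspread)"
      unfolding df_antichain_def by blast
    show "finite (Pow (df_lattice (Pspread :: (real ^ 'n) set)))" using finlat by simp
  qed
  have M1: "Max (card ` {A. df_antichain (Pspread :: (real ^ 'n) set) A}) = card L"
  proof (rule Max_eqI)
    show "finite (card ` {A. df_antichain (Pspread :: (real ^ 'n) set) A})" using finAC by simp
  next
    fix y assume "y \<in> card ` {A. df_antichain (Pspread :: (real ^ 'n) set) A}"
    then show "y \<le> card L" using bound by blast
  next
    show "card L \<in> card ` {A. df_antichain (Pspread :: (real ^ 'n) set) A}"
      using acl[of d] rl by auto
  qed
  have M2: "Max ((\<lambda>k. card (rank_level (Pspread :: (real ^ 'n) set) k))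
                 ` df_rank (Pspread :: (real ^ 'n) set) ` df_lattice (Pspread :: (real ^ 'n) set)) = card L"
  proof (rule Max_eqI)
    show "finite ((\<lambda>k. card (rank_level (Pspread :: (real ^ 'n) set) k))
                 ` df_rank (Pspread :: (real ^ 'n) set) ` df_lattice (Pspread :: (real ^ 'n) set))"
      using finlat by simp
  next
    fix y assume "y \<in> (\<lambda>k. card (rank_level (Pspread :: (real ^ 'n) set) k))
                 ` df_rank (Pspread :: (real ^ 'n) set) ` df_lattice (Pspread :: (real ^ 'n) set)"
    then obtain k where "y = card (rank_level (Pspread :: (real ^ 'n) set) k)" by blast
    then show "y \<le> card L" using bound[OF acl[of k]] by simp
  next
    have x0V: "x0 \<in> VP" "rk x0 = m" using x0 unfolding Vm_def by auto
    have "DFs x0 \<in> df_lattice (Pspread :: (real ^ 'n) set)" using x0V unfolding lattice_eq by blast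
    moreover have "df_rank (Pspread :: (real ^ 'n) set) (DFs x0) = d"
      using df_rank_DFs[OF x0V(1)] level_eq[OF x0V(1)] x0V unfolding d_def m_def by simp
    ultimately have "d \<in> df_rank (Pspread :: (real ^ 'n) set) ` df_lattice (Pspread :: (real ^ 'n) set)" by (metis image_eqI)
    then show "card L \<in> (\<lambda>k. card (rank_level (Pspread :: (real ^ 'n) set) k))
                 ` df_rank (Pspread :: (real ^ 'n) set) ` df_lattice (Pspread :: (real ^ 'n) set)"
      using rl by (metis image_eqI)
  qed
  show ?thesis using finlat M1 M2 dfd acl[of d] rl unfolding d_def by simp
qed


end
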